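(* Under the assumptions of Theorem 1 (with $\varepsilon>0$), let $(u,v)$ be a classical solution of the problem on $[0,T)$ with $u>0$. Let $\beta(x,t)=[\beta_2(t)-\beta_1(t)]x+\beta_1(t)$. Then there is a constant $C>0$ independent of $t$ and $T$ such that for all $t\in[0,T)$ \[ E(u,\alpha)(t)+\|(v-\beta)(t)\|^2+\int_0^t\!\!\int_0^1\frac{(u_x)^2}{u}\,dx\,d\tau+\int_0^t\varepsilon\|(v_x-\beta_x)(\tau)\|^2\,d\tau\le C . \]
   Context: Setting of Theorem 1: $\varepsilon>0$; on $(0,1)\times(0,\infty)$, $u_t-(uv)_x=u_{xx}$, $v_t-u_x=\varepsilon v_{xx}+\varepsilon(v^2)_x$, $(u,v)(x,0)=(u_0,v_0)(x)$, $u(0,t)=u(1,t)=\alpha(t)$, $v(0,t)=\beta_1(t)$, $v(1,t)=\beta_2(t)$; $u_0>0$, $(u_0,v_0)\in[H^2((0,1))]^2$ compatible with the boundary data; $\alpha,\beta_1,\beta_2$ smooth on $[0,\infty)$ with $\alpha\ge\underline\alpha>0$, $\alpha'\in W^{1,1}(\mathbb{R}_+)$, $\beta_1-\beta_2\in L^1(\mathbb{R}_+)$, $\beta_1',\beta_2'\in W^{1,1}(\mathbb{R}_+)$. The relative entropy is \[ E(u,\alpha)(t)=\int_0^1\big[(u\ln u-u)-(\alpha\ln\alpha-\alpha)-(u-\alpha)\ln\alpha\big]\,dx\ \ (\ge 0). \] $\|\cdot\|$ is the $L^2((0,1))$ norm. *)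

theory Defs
  imports "HOL-Analysis.Analysis"
begin

text \<open>Membership in the Sobolev space H^2((0,1)): f has an absolutely continuous
 derivative f1 whose derivative f2 is square integrable (and integrable).\<close>
definition H2_01 :: "(real \<Rightarrow> real) \<Rightarrow> bool" where
  "H2_01 f \<longleftrightarrow> (\<exists>f1 f2. f2 absolutely_integrable_on {0..1} \<and>
      (\<lambda>x. (f2 x)^2) integrable_on {0..1} \<and>
      (\<forall>x\<in>{0..1}. f1 x = f1 0 + integral {0..x} f2 \<and> f x = f 0 + integral {0..x} f1))"

text \<open>Smoothness on [0,infinity): a sequence of derivatives D with D 0 = g and
  D (Suc n) the (one-sided at 0) derivative of D n on [0,infinity).\<close>
definition smooth_derivs_nonneg :: "(nat \<Rightarrow> real \<Rightarrow> real) \<Rightarrow> (real \<Rightarrow> real) \<Rightarrow> bool" where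
  "smooth_derivs_nonneg D g \<longleftrightarrow> (\<forall>t\<ge>0. D 0 t = g t) \<and>
     (\<forall>n. \<forall>t\<ge>0. (D n has_real_derivative D (Suc n) t) (at t within {0..}))"

definition rel_entropy :: "(real \<Rightarrow> real) \<Rightarrow> real \<Rightarrow> real" where
  "rel_entropy w a = integral {0..1}
     (\<lambda>x. (w x * ln (w x) - w x) - (a * ln a - a) - (w x - a) * ln a)"

text \<open>Classical solution on [0,1] x [0,T) of
   u_t - (u v)_x = u_xx,  v_t - u_x = eps v_xx + eps (v^2)_x,
 with the given initial and boundary data; ux, uxx, ut, vx, vxx, vt are the
 partial derivatives of u and v.\<close>
definition classical_solution ::
  "real \<Rightarrow> (real \<Rightarrow> real) \<Rightarrow> (real \<Rightarrow> real) \<Rightarrow> (real \<Rightarrow> real) \<Rightarrow>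
   (real \<Rightarrow> real) \<Rightarrow> (real \<Rightarrow> real) \<Rightarrow> real \<Rightarrow>
   (real \<Rightarrow> real \<Rightarrow> real) \<Rightarrow> (real \<Rightarrow> real \<Rightarrow> real) \<Rightarrow>
   (real \<Rightarrow> real \<Rightarrow> real) \<Rightarrow> (real \<Rightarrow> real \<Rightarrow> real) \<Rightarrow> (real \<Rightarrow> real \<Rightarrow> real) \<Rightarrow>
   (real \<Rightarrow> real \<Rightarrow> real) \<Rightarrow> (real \<Rightarrow> real \<Rightarrow> real) \<Rightarrow> (real \<Rightarrow> real \<Rightarrow> real) \<Rightarrow> bool" where
  "classical_solution eps alpha beta1 beta2 u0 v0 T u v ux uxx ut vx vxx vt \<longleftrightarrow>
    (\<forall>t\<in>{0..<T}. \<forall>x\<in>{0..1}.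
        ((\<lambda>y. u y t) has_real_derivative ux x t) (at x within {0..1}) \<and>
        ((\<lambda>y. v y t) has_real_derivative vx x t) (at x within {0..1})) \<and>
    (\<forall>t\<in>{0<..<T}. \<forall>x\<in>{0..1}.
        ((\<lambda>y. ux y t) has_real_derivative uxx x t) (at x within {0..1}) \<and>
        ((\<lambda>y. vx y t) has_real_derivative vxx x t) (at x within {0..1}) \<and>
        ((\<lambda>s. u x s) has_real_derivative ut x t) (at t) \<and>
        ((\<lambda>s. v x s) has_real_derivative vt x t) (at t)) \<and>
    continuous_on ({0..1} \<times> {0..<T}) (\<lambda>(x,t). u x t) \<and>
    continuous_on ({0..1} \<times> {0..<T}) (\<lambda>(x,t). v x t) \<and>
    continuous_on ({0..1} \<times> {0..<T}) (\<lambda>(x,t). ux x t) \<and>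
    continuous_on ({0..1} \<times> {0..<T}) (\<lambda>(x,t). vx x t) \<and>
    continuous_on ({0..1} \<times> {0<..<T}) (\<lambda>(x,t). uxx x t) \<and>
    continuous_on ({0..1} \<times> {0<..<T}) (\<lambda>(x,t). vxx x t) \<and>
    continuous_on ({0..1} \<times> {0<..<T}) (\<lambda>(x,t). ut x t) \<and>
    continuous_on ({0..1} \<times> {0<..<T}) (\<lambda>(x,t). vt x t) \<and>
    (\<forall>t\<in>{0<..<T}. \<forall>x\<in>{0<..<1}.
        ut x t - (ux x t * v x t + u x t * vx x t) = uxx x t \<and>
        vt x t - ux x t = eps * vxx x t + eps * (2 * v x t * vx x t)) \<and>
    (\<forall>x\<in>{0..1}. u x 0 = u0 x \<and> v x 0 = v0 x) \<and>
    (\<forall>t\<in>{0..<T}. u 0 t = alpha t \<and> u 1 t = alpha t \<and> v 0 t = beta1 t \<and> v 1 t = beta2 t)"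

end

theory Submission
  imports Defs
begin


lemma slice_cont:
  assumes "continuous_on (A \<times> B) (\<lambda>(x,t). f x t)" "t \<in> B"
  shows "continuous_on A (\<lambda>x. f x t)"
proof -
  have "continuous_on A (\<lambda>x. (x,t))" by (intro continuous_intros)
  moreover have "(\<lambda>x. (x,t)) ` A \<subseteq> A \<times> B" using assms(2) by auto
  ultimately show ?thesis using continuous_on_compose2[OF assms(1), of A "\<lambda>x. (x,t)"] by simp
qed

lemma swap_cont:
  assumes "continuous_on (A \<times> B) (\<lambda>(x,t). f x t)" "U \<subseteq> B"
  shows "continuous_on (U \<times> A) (\<lambda>p. f (snd p) (fst p))"
proof -
  have "continuous_on (U \<times> A) (\<lambda>p. (snd p, fst p))" by (intro continuous_intros)
  moreover have "(\<lambda>p. (snd p, fst p)) ` (U \<times> A) \<subseteq> A \<times> B" using assms(2) by auto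
  ultimately show ?thesis using continuous_on_compose2[OF assms(1), of "U \<times> A" "\<lambda>p. (snd p, fst p)"] by simp
qed

lemma fst_cont:
  assumes "continuous_on U g"
  shows "continuous_on (U \<times> A) (\<lambda>p. g (fst p))"
proof -
  have "continuous_on (U \<times> A) fst" by (intro continuous_intros)
  moreover have "fst ` (U \<times> A) \<subseteq> U" by auto
  ultimately show ?thesis using continuous_on_compose2[OF assms(1), of "U \<times> A" fst] by simp
qed

lemma int_cont:
  fixes f :: "real \<Rightarrow> real"
  shows "continuous_on {0..1} f \<Longrightarrow> f integrable_on {0..1}"
  by (rule integrable_continuous_interval)

lemma aux1: "(a::real) \<noteq> 0 \<Longrightarrow> b*c + c^2/a = (a*b + c) * (c/a)"
  by (simp add: field_simps power2_eq_square)

definition phi :: "real \<Rightarrow> real \<Rightarrow> real" where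
  "phi y a = (y * ln y - y) - (a * ln a - a) - (y - a) * ln a"

lemma phi_nonneg: assumes "0 < y" "0 < a" shows "0 \<le> phi y a"
proof -
  have "ln (a / y) \<le> a / y - 1" using assms by (intro ln_le_minus_one) auto
  then have "ln a - ln y \<le> a / y - 1" using assms by (simp add: ln_div)
  then have "y * (ln a - ln y) \<le> y * (a / y - 1)" using assms by (intro mult_left_mono) auto
  moreover have "y * (a / y - 1) = a - y" using assms by (simp add: field_simps)
  ultimately have "y * (ln a - ln y) \<le> a - y" by simp
  then show ?thesis unfolding phi_def by (simp add: algebra_simps)
qed

lemma phi_mass: assumes "0 < y" "0 < a" shows "y \<le> phi y a + exp 2 * a"
proof (cases "y \<le> exp 2 * a")
  case True then show ?thesis using phi_nonneg[OF assms] by linarith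
next
  case False
  then have "ln (exp 2 * a) < ln y" using assms by (subst ln_less_cancel_iff) auto
  then have "2 + ln a < ln y" using assms by (simp add: ln_mult)
  then have "y * 2 \<le> y * (ln y - ln a)" using assms by (intro mult_left_mono) auto
  then have h: "y * 2 \<le> y * ln y - y * ln a" by (simp add: right_diff_distrib)
  have "0 < exp 2 * a" using assms by simp
  then show ?thesis unfolding phi_def left_diff_distrib using h assms by linarith
qed

lemma leib:
  fixes f fx :: "real \<Rightarrow> real \<Rightarrow> real"
  assumes t0: "t0 \<in> {0<..<T}"
    and d: "\<And>t x. t \<in> {0<..<T} \<Longrightarrow> x \<in> {0..1} \<Longrightarrow> ((\<lambda>s. f s x) has_real_derivative fx t x) (at t)"
    and c: "\<And>t. t \<in> {0<..<T} \<Longrightarrow> continuous_on {0..1} (f t)"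
    and cd: "continuous_on ({0<..<T} \<times> {0..1}) (\<lambda>p. fx (fst p) (snd p))"
  shows "((\<lambda>t. integral {0..1} (f t)) has_real_derivative integral {0..1} (fx t0)) (at t0)"
proof -
  define \<delta> where "\<delta> = min t0 (T - t0) / 2"
  have dpos: "\<delta> > 0" using t0 by (auto simp: \<delta>_def)
  define U where "U = {t0 - \<delta> .. t0 + \<delta>}"
  have d1: "\<delta> \<le> t0/2" "\<delta> \<le> (T - t0)/2" by (auto simp: \<delta>_def)
  have UT: "U \<subseteq> {0<..<T}" using t0 dpos d1 by (auto simp: U_def)
  have "((\<lambda>t. integral (cbox 0 1) (f t)) has_real_derivative integral (cbox 0 1) (fx t0)) (at t0 within U)"
  proof (rule leibniz_rule_field_derivative)
    fix t x assume "t \<in> U" "x \<in> cbox (0::real) 1"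
    moreover have "t \<in> {0<..<T}" using UT \<open>t \<in> U\<close> by auto
    ultimately show "((\<lambda>t. f t x) has_real_derivative fx t x) (at t within U)"
      using d[of t x] by (auto intro: has_field_derivative_at_within)
  next
    fix t assume "t \<in> U"
    then have "t \<in> {0<..<T}" using UT by auto
    then show "f t integrable_on cbox 0 1" using c[of t] by (auto intro: integrable_continuous_interval)
  next
    have "continuous_on (U \<times> cbox 0 1) (\<lambda>p. fx (fst p) (snd p))"
      by (rule continuous_on_subset[OF cd]) (use UT in auto)
    then show "continuous_on (U \<times> cbox 0 1) (\<lambda>(t, x). fx t x)" by (simp add: case_prod_beta)
  next
    show "t0 \<in> U" "convex U" using dpos by (auto simp: U_def)
  qed
  moreover have "t0 \<in> interior U" using dpos by (auto simp: U_def)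
  ultimately show ?thesis by (metis at_within_interior cbox_interval)
qed

lemma alg:
  fixes a al M E W P Q bb c1 c2 amin amax Bm eps :: real
  assumes amin: "amin > 0" "amin \<le> al" "al \<le> amax"
    and M: "0 \<le> M" "M \<le> E + exp 2 * al"
    and E: "0 \<le> E" and W: "0 \<le> W"
    and P: "\<bar>P\<bar> \<le> Bm * (1 + W) / 2" and Q: "\<bar>Q\<bar> \<le> (\<bar>c1\<bar> + \<bar>c2\<bar>) * (1 + W) / 2"
    and eps: "eps > 0" and Bm: "Bm \<ge> 0"
  shows "- a / al * (M - al) - al * bb + bb * M + eps * bb * W + 2 * eps * bb * P - Q
     \<le> ((1 + exp 2 * amax + amax) / amin * \<bar>a\<bar> + (1 + exp 2 * amax + amax + 2 * eps + 2 * eps * Bm) * \<bar>bb\<bar> + \<bar>c1\<bar> + \<bar>c2\<bar>) * (1 + E + W / 2)"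
proof -
  define F where "F = E + W / 2"
  define c0 where "c0 = 1 + exp 2 * amax + amax"
  have F0: "0 \<le> F" using E W by (simp add: F_def)
  have al0: "0 < al" using amin by simp
  have amax0: "0 < amax" using amin by simp
  have e2: "exp 2 * al \<le> exp 2 * amax" using amin by simp
  have h0: "M + amax \<le> c0 * (1 + F)"
  proof -
    have "M + amax \<le> F + exp 2 * amax + amax" using M e2 W unfolding F_def by linarith
    also have "\<dots> \<le> c0 * (1 + F)"
    proof -
      have "0 \<le> (exp 2 * amax + amax) * F" using amax0 F0 by simp
      then show ?thesis by (simp add: c0_def algebra_simps)
    qed
    finally show ?thesis .
  qed
  have T1: "- a / al * (M - al) \<le> (c0 / amin * \<bar>a\<bar>) * (1 + F)"
  proof -
    have "- a / al * (M - al) \<le> \<bar>a\<bar> / al * \<bar>M - al\<bar>"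
    proof -
      have "- a / al * (M - al) \<le> \<bar>- a / al * (M - al)\<bar>" by (rule abs_ge_self)
      also have "\<dots> = \<bar>a\<bar> / al * \<bar>M - al\<bar>" using al0 by (simp add: abs_mult)
      finally show ?thesis .
    qed
    also have "\<dots> \<le> \<bar>a\<bar> / amin * (M + amax)"
    proof (rule mult_mono)
      show "\<bar>a\<bar> / al \<le> \<bar>a\<bar> / amin" using amin by (simp add: divide_left_mono)
      show "\<bar>M - al\<bar> \<le> M + amax" using M amin by simp
    qed (use amin in auto)
    also have "\<dots> \<le> \<bar>a\<bar> / amin * (c0 * (1 + F))"
      using h0 amin by (intro mult_left_mono) auto
    finally show ?thesis by (simp add: field_simps)
  qed
  have T2: "- al * bb + bb * M \<le> (c0 * \<bar>bb\<bar>) * (1 + F)"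
  proof -
    have "- al * bb + bb * M \<le> \<bar>bb\<bar> * (al + M)"
    proof -
      have "- al * bb + bb * M = bb * (M - al)" by (simp add: algebra_simps)
      also have "\<dots> \<le> \<bar>bb\<bar> * \<bar>M - al\<bar>" by (metis abs_ge_self abs_mult)
      also have "\<dots> \<le> \<bar>bb\<bar> * (al + M)" using M al0 by (intro mult_left_mono) auto
      finally show ?thesis .
    qed
    also have "\<dots> \<le> \<bar>bb\<bar> * (c0 * (1 + F))" using h0 amin by (intro mult_left_mono) auto
    finally show ?thesis by (simp add: algebra_simps)
  qed
  have T3: "eps * bb * W + 2 * eps * bb * P \<le> ((2 * eps + 2 * eps * Bm) * \<bar>bb\<bar>) * (1 + F)"
  proof -
    have a1: "eps * bb * W \<le> eps * \<bar>bb\<bar> * W" using eps W by (intro mult_right_mono mult_left_mono) auto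
    have a2: "2 * eps * bb * P \<le> 2 * eps * \<bar>bb\<bar> * \<bar>P\<bar>"
    proof -
      have "2 * eps * bb * P \<le> \<bar>2 * eps * bb * P\<bar>" by (rule abs_ge_self)
      also have "\<dots> = 2 * eps * \<bar>bb\<bar> * \<bar>P\<bar>" using eps by (simp add: abs_mult)
      finally show ?thesis .
    qed
    have a3: "2 * eps * \<bar>bb\<bar> * \<bar>P\<bar> \<le> 2 * eps * \<bar>bb\<bar> * (Bm * (1 + W) / 2)"
      using P eps by (intro mult_left_mono) auto
    have a4: "W \<le> 2 * (1 + F)" using E F0 by (simp add: F_def)
    have a5: "1 + W \<le> 2 * (1 + F)" using E F0 by (simp add: F_def)
    have "eps * \<bar>bb\<bar> * W \<le> eps * \<bar>bb\<bar> * (2 * (1 + F))" using a4 eps by (intro mult_left_mono) auto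
    moreover have "2 * eps * \<bar>bb\<bar> * (Bm * (1 + W) / 2) \<le> 2 * eps * \<bar>bb\<bar> * (Bm * (2 * (1 + F)) / 2)"
      using a5 eps Bm by (intro mult_left_mono divide_right_mono) auto
    ultimately show ?thesis using a1 a2 a3 by (simp add: algebra_simps)
  qed
  have T4: "- Q \<le> (\<bar>c1\<bar> + \<bar>c2\<bar>) * (1 + F)"
  proof -
    have "(\<bar>c1\<bar> + \<bar>c2\<bar>) * (1 + W) / 2 \<le> (\<bar>c1\<bar> + \<bar>c2\<bar>) * (1 + F)"
    proof -
      have "(1 + W) / 2 \<le> 1 + F" using E W by (simp add: F_def)
      then have "(\<bar>c1\<bar> + \<bar>c2\<bar>) * ((1 + W) / 2) \<le> (\<bar>c1\<bar> + \<bar>c2\<bar>) * (1 + F)" by (intro mult_left_mono) auto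
      then show ?thesis by simp
    qed
    then show ?thesis using Q by linarith
  qed
  have "- a / al * (M - al) - al * bb + bb * M + eps * bb * W + 2 * eps * bb * P - Q
      \<le> (c0 / amin * \<bar>a\<bar>) * (1 + F) + (c0 * \<bar>bb\<bar>) * (1 + F) + ((2 * eps + 2 * eps * Bm) * \<bar>bb\<bar>) * (1 + F) + (\<bar>c1\<bar> + \<bar>c2\<bar>) * (1 + F)"
    using T1 T2 T3 T4 by linarith
  also have "\<dots> = ((1 + exp 2 * amax + amax) / amin * \<bar>a\<bar> + (1 + exp 2 * amax + amax + 2 * eps + 2 * eps * Bm) * \<bar>bb\<bar> + \<bar>c1\<bar> + \<bar>c2\<bar>) * (1 + E + W / 2)"
    by (simp add: F_def c0_def algebra_simps)
  finally show ?thesis .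
qed

lemma gronwall_aux:
  fixes K g :: "real \<Rightarrow> real"
  assumes t: "0 \<le> t"
    and Kc: "continuous_on {0..t} K"
    and gc: "continuous_on {0..t} g"
    and Kd: "\<And>s. 0 < s \<Longrightarrow> s < t \<Longrightarrow> \<exists>K'. (K has_real_derivative K') (at s) \<and> K' \<le> g s * K s"
  shows "K t \<le> K 0 * exp (integral {0..t} g)"
proof -
  define G where "G s = integral {0..s} g" for s
  define H where "H s = K s * exp (- G s)" for s
  have Gd: "(G has_real_derivative g s) (at s within {0..t})" if "s \<in> {0..t}" for s
    unfolding G_def by (rule integral_has_real_derivative[OF gc that])
  have Gc: "continuous_on {0..t} G"
    using Gd by (meson DERIV_continuous continuous_on_eq_continuous_within)
  have Hc: "continuous_on {0..t} H"
    unfolding H_def by (intro continuous_intros Kc Gc)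
  have "H t \<le> H 0"
  proof (rule DERIV_nonpos_imp_decreasing_open[OF t _ Hc])
    fix s assume s: "0 < s" "s < t"
    then obtain K' where K': "(K has_real_derivative K') (at s)" "K' \<le> g s * K s"
      using Kd by blast
    have "s \<in> interior {0..t}" using s by auto
    then have eq: "at s within {0..t} = at s" by (rule at_within_interior)
    have Gd': "(G has_real_derivative g s) (at s)"
      using Gd[of s] s eq by auto
    have e: "((\<lambda>s. exp (- G s)) has_real_derivative exp (- G s) * (- g s)) (at s)"
      using DERIV_fun_exp[OF DERIV_minus[OF Gd']] .
    have "(H has_real_derivative (K' * exp (- G s) + (exp (- G s) * (- g s)) * K s)) (at s)"
      unfolding H_def using DERIV_mult[OF K'(1) e] .
    moreover have "K' * exp (- G s) + (exp (- G s) * (- g s)) * K s \<le> 0"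
    proof -
      have "K' * exp (- G s) + (exp (- G s) * (- g s)) * K s = (K' - g s * K s) * exp (- G s)"
        by (simp add: algebra_simps)
      also have "\<dots> \<le> 0" using K'(2) by (simp add: mult_nonpos_nonneg)
      finally show ?thesis .
    qed
    ultimately show "\<exists>y. (H has_real_derivative y) (at s) \<and> y \<le> 0" by blast
  qed
  then have "K t * exp (- G t) \<le> K 0" unfolding H_def G_def by simp
  then have "K t * exp (- G t) * exp (G t) \<le> K 0 * exp (G t)" by (simp add: mult_right_mono)
  then show ?thesis by (simp add: G_def exp_minus field_simps)
qed


locale sol =
  fixes eps :: real and alpha beta1 beta2 a1 c1 c2 u0 v0 :: "real \<Rightarrow> real" and T :: real
    and u v ux uxx ut vx vxx vt :: "real \<Rightarrow> real \<Rightarrow> real"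
  assumes eps: "eps > 0"
    and alpha_pos: "\<And>t. 0 \<le> t \<Longrightarrow> 0 < alpha t"
    and dA: "\<And>t. 0 \<le> t \<Longrightarrow> (alpha has_real_derivative a1 t) (at t within {0..})"
    and dB1: "\<And>t. 0 \<le> t \<Longrightarrow> (beta1 has_real_derivative c1 t) (at t within {0..})"
    and dB2: "\<And>t. 0 \<le> t \<Longrightarrow> (beta2 has_real_derivative c2 t) (at t within {0..})"
    and ca1: "continuous_on {0..} a1" and cc1: "continuous_on {0..} c1" and cc2: "continuous_on {0..} c2"
    and cs: "classical_solution eps alpha beta1 beta2 u0 v0 T u v ux uxx ut vx vxx vt"
    and upos: "\<forall>t\<in>{0..<T}. \<forall>x\<in>{0..1}. u x t > 0"
begin

lemma derivs:
  shows "\<And>t x. t\<in>{0..<T} \<Longrightarrow> x\<in>{0..1} \<Longrightarrow> ((\<lambda>y. u y t) has_real_derivative ux x t) (at x within {0..1})"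
    and "\<And>t x. t\<in>{0..<T} \<Longrightarrow> x\<in>{0..1} \<Longrightarrow> ((\<lambda>y. v y t) has_real_derivative vx x t) (at x within {0..1})"
    and "\<And>t x. t\<in>{0<..<T} \<Longrightarrow> x\<in>{0..1} \<Longrightarrow> ((\<lambda>y. ux y t) has_real_derivative uxx x t) (at x within {0..1})"
    and "\<And>t x. t\<in>{0<..<T} \<Longrightarrow> x\<in>{0..1} \<Longrightarrow> ((\<lambda>y. vx y t) has_real_derivative vxx x t) (at x within {0..1})"
    and "\<And>t x. t\<in>{0<..<T} \<Longrightarrow> x\<in>{0..1} \<Longrightarrow> ((\<lambda>s. u x s) has_real_derivative ut x t) (at t)"
    and "\<And>t x. t\<in>{0<..<T} \<Longrightarrow> x\<in>{0..1} \<Longrightarrow> ((\<lambda>s. v x s) has_real_derivative vt x t) (at t)"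
  using cs unfolding classical_solution_def by blast+

lemma conts:
  shows "continuous_on ({0..1} \<times> {0..<T}) (\<lambda>(x,t). u x t)"
    and "continuous_on ({0..1} \<times> {0..<T}) (\<lambda>(x,t). v x t)"
    and "continuous_on ({0..1} \<times> {0..<T}) (\<lambda>(x,t). ux x t)"
    and "continuous_on ({0..1} \<times> {0..<T}) (\<lambda>(x,t). vx x t)"
    and "continuous_on ({0..1} \<times> {0<..<T}) (\<lambda>(x,t). uxx x t)"
    and "continuous_on ({0..1} \<times> {0<..<T}) (\<lambda>(x,t). vxx x t)"
    and "continuous_on ({0..1} \<times> {0<..<T}) (\<lambda>(x,t). ut x t)"
    and "continuous_on ({0..1} \<times> {0<..<T}) (\<lambda>(x,t). vt x t)"
  using cs unfolding classical_solution_def by blast+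

lemma pde:
  assumes "t\<in>{0<..<T}" "x\<in>{0<..<1}"
  shows "ut x t = ux x t * v x t + u x t * vx x t + uxx x t"
    and "vt x t = ux x t + eps * vxx x t + eps * (2 * v x t * vx x t)"
  using cs assms unfolding classical_solution_def by (auto simp: algebra_simps)

lemma bdry:
  assumes "t\<in>{0..<T}"
  shows "u 0 t = alpha t" "u 1 t = alpha t" "v 0 t = beta1 t" "v 1 t = beta2 t"
  using cs assms unfolding classical_solution_def by blast+

lemma init:
  assumes "x\<in>{0..1}"
  shows "u x 0 = u0 x" "v x 0 = v0 x"
  using cs assms unfolding classical_solution_def by blast+

lemma at_pos: "0 < t \<Longrightarrow> at t within {0..} = at (t::real)"
  by (rule at_within_interior) (use interior_Ici[of "-1::real" 0] in simp)

lemma dA': "0 < t \<Longrightarrow> (alpha has_real_derivative a1 t) (at t)"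
  using dA[of t] at_pos[of t] by simp
lemma dB1': "0 < t \<Longrightarrow> (beta1 has_real_derivative c1 t) (at t)"
  using dB1[of t] at_pos[of t] by simp
lemma dB2': "0 < t \<Longrightarrow> (beta2 has_real_derivative c2 t) (at t)"
  using dB2[of t] at_pos[of t] by simp

lemma calpha: "continuous_on {0..} alpha"
  using dA by (meson DERIV_continuous atLeast_iff continuous_on_eq_continuous_within)
lemma cbeta1: "continuous_on {0..} beta1"
  using dB1 by (meson DERIV_continuous atLeast_iff continuous_on_eq_continuous_within)
lemma cbeta2: "continuous_on {0..} beta2"
  using dB2 by (meson DERIV_continuous atLeast_iff continuous_on_eq_continuous_within)

lemma cU: "continuous_on ({0<..<T} \<times> {0..1}) (\<lambda>p. u (snd p) (fst p))"
  by (rule swap_cont[OF conts(1)]) auto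
lemma cV: "continuous_on ({0<..<T} \<times> {0..1}) (\<lambda>p. v (snd p) (fst p))"
  by (rule swap_cont[OF conts(2)]) auto
lemma cUx: "continuous_on ({0<..<T} \<times> {0..1}) (\<lambda>p. ux (snd p) (fst p))"
  by (rule swap_cont[OF conts(3)]) auto
lemma cVx: "continuous_on ({0<..<T} \<times> {0..1}) (\<lambda>p. vx (snd p) (fst p))"
  by (rule swap_cont[OF conts(4)]) auto
lemma cUt: "continuous_on ({0<..<T} \<times> {0..1}) (\<lambda>p. ut (snd p) (fst p))"
  by (rule swap_cont[OF conts(7)]) auto
lemma cVt: "continuous_on ({0<..<T} \<times> {0..1}) (\<lambda>p. vt (snd p) (fst p))"
  by (rule swap_cont[OF conts(8)]) auto
lemma cA: "continuous_on ({0<..<T} \<times> {0..1}) (\<lambda>p. alpha (fst p))"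
  by (rule fst_cont, rule continuous_on_subset[OF calpha]) auto
lemma cB1: "continuous_on ({0<..<T} \<times> {0..1}) (\<lambda>p. beta1 (fst p))"
  by (rule fst_cont, rule continuous_on_subset[OF cbeta1]) auto
lemma cB2: "continuous_on ({0<..<T} \<times> {0..1}) (\<lambda>p. beta2 (fst p))"
  by (rule fst_cont, rule continuous_on_subset[OF cbeta2]) auto
lemma cA1: "continuous_on ({0<..<T} \<times> {0..1}) (\<lambda>p. a1 (fst p))"
  by (rule fst_cont, rule continuous_on_subset[OF ca1]) auto
lemma cC1: "continuous_on ({0<..<T} \<times> {0..1}) (\<lambda>p. c1 (fst p))"
  by (rule fst_cont, rule continuous_on_subset[OF cc1]) auto
lemma cC2: "continuous_on ({0<..<T} \<times> {0..1}) (\<lambda>p. c2 (fst p))"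
  by (rule fst_cont, rule continuous_on_subset[OF cc2]) auto

lemma upos_S: "p \<in> {0<..<T}\<times>{0..1} \<Longrightarrow> 0 < u (snd p) (fst p)"
proof -
  assume "p \<in> {0<..<T}\<times>{0..1}"
  then have "fst p \<in> {0..<T}" "snd p \<in> {0..1}" by (auto simp: mem_Times_iff)
  then show ?thesis using upos by blast
qed

lemma alpha_pos_S: "p \<in> {0<..<T}\<times>{0..1} \<Longrightarrow> 0 < alpha (fst p)"
proof -
  assume "p \<in> {0<..<T}\<times>{0..1}"
  then have "0 \<le> fst p" by (auto simp: mem_Times_iff)
  then show ?thesis by (rule alpha_pos)
qed

definition E :: "real \<Rightarrow> real" where "E t = integral {0..1} (\<lambda>x. phi (u x t) (alpha t))"

lemma dE:
  assumes t0: "t0 \<in> {0<..<T}"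
  shows "(E has_real_derivative integral {0..1} (\<lambda>x. ut x t0 * (ln (u x t0) - ln (alpha t0)) - (u x t0 - alpha t0) * a1 t0 / alpha t0)) (at t0)"
  unfolding E_def
proof (rule leib[OF t0, where fx="\<lambda>t x. ut x t * (ln (u x t) - ln (alpha t)) - (u x t - alpha t) * a1 t / alpha t"])
  fix t x :: real assume t: "t \<in> {0<..<T}" and x: "x \<in> {0..1}"
  have up: "0 < u x t" using upos t x by auto
  have ap: "0 < alpha t" using alpha_pos t by auto
  show "((\<lambda>s. phi (u x s) (alpha s)) has_real_derivative ut x t * (ln (u x t) - ln (alpha t)) - (u x t - alpha t) * a1 t / alpha t) (at t)"
  proof -
    have U: "(u x has_real_derivative ut x t) (at t)" using derivs(5)[OF t x] by simp
    have A: "(alpha has_real_derivative a1 t) (at t)" using dA'[of t] t by simp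
    have LU: "((\<lambda>s. ln (u x s)) has_real_derivative inverse (u x t) * ut x t) (at t)"
      by (rule DERIV_chain'[OF U DERIV_ln[OF up]])
    have LA: "((\<lambda>s. ln (alpha s)) has_real_derivative inverse (alpha t) * a1 t) (at t)"
      by (rule DERIV_chain'[OF A DERIV_ln[OF ap]])
    have "((\<lambda>s. phi (u x s) (alpha s)) has_real_derivative ((ut x t * ln (u x t) + inverse (u x t) * ut x t * u x t) - ut x t) - ((a1 t * ln (alpha t) + inverse(alpha t) * a1 t * alpha t) - a1 t) - ((ut x t - a1 t) * ln (alpha t) + inverse (alpha t) * a1 t * (u x t - alpha t))) (at t)"
      unfolding phi_def by (intro DERIV_diff DERIV_mult U A LU LA)
    moreover have "((ut x t * ln (u x t) + inverse (u x t) * ut x t * u x t) - ut x t) - ((a1 t * ln (alpha t) + inverse(alpha t) * a1 t * alpha t) - a1 t) - ((ut x t - a1 t) * ln (alpha t) + inverse (alpha t) * a1 t * (u x t - alpha t))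
      = ut x t * (ln (u x t) - ln (alpha t)) - (u x t - alpha t) * a1 t / alpha t"
      using up ap by (simp add: field_simps)
    ultimately show ?thesis by simp
  qed
next
  fix t assume t: "t \<in> {0<..<T}"
  have c: "continuous_on {0..1} (\<lambda>x. u x t)" by (rule slice_cont[OF conts(1)]) (use t in auto)
  show "continuous_on {0..1} (\<lambda>x. phi (u x t) (alpha t))"
  proof -
    have "\<forall>x\<in>{0..1}. u x t \<noteq> 0" using upos t by (metis greaterThanLessThan_iff atLeastLessThan_iff less_imp_le less_irrefl)
    then show ?thesis unfolding phi_def using upos t by (auto intro!: continuous_intros c)
  qed
next
  show "continuous_on ({0<..<T} \<times> {0..1}) (\<lambda>p. ut (snd p) (fst p) * (ln (u (snd p) (fst p)) - ln (alpha (fst p))) - (u (snd p) (fst p) - alpha (fst p)) * a1 (fst p) / alpha (fst p))"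
  proof -
    have nz: "\<forall>p \<in> {0<..<T}\<times>{0..1}. u (snd p) (fst p) \<noteq> 0" "\<forall>p \<in> {0<..<T}\<times>{0..1}. alpha (fst p) \<noteq> 0"
      using upos_S alpha_pos_S by (metis less_irrefl)+
    show ?thesis by (intro continuous_on_diff continuous_on_mult continuous_on_divide continuous_on_ln cUt cU cA cA1 nz)
  qed
qed


lemma sl:
  assumes t: "t \<in> {0<..<T}"
  shows "continuous_on {0..1} (\<lambda>x. u x t)" "continuous_on {0..1} (\<lambda>x. v x t)"
    "continuous_on {0..1} (\<lambda>x. ux x t)" "continuous_on {0..1} (\<lambda>x. vx x t)"
    "continuous_on {0..1} (\<lambda>x. uxx x t)" "continuous_on {0..1} (\<lambda>x. vxx x t)"
    "continuous_on {0..1} (\<lambda>x. ut x t)" "continuous_on {0..1} (\<lambda>x. vt x t)"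
  using t by (auto intro: slice_cont[OF conts(1)] slice_cont[OF conts(2)] slice_cont[OF conts(3)]
     slice_cont[OF conts(4)] slice_cont[OF conts(5)] slice_cont[OF conts(6)] slice_cont[OF conts(7)]
     slice_cont[OF conts(8)])

definition bb :: "real \<Rightarrow> real" where "bb t = beta2 t - beta1 t"
definition bet :: "real \<Rightarrow> real \<Rightarrow> real" where "bet x t = bb t * x + beta1 t"
definition w :: "real \<Rightarrow> real \<Rightarrow> real" where "w x t = v x t - bet x t"
definition bt :: "real \<Rightarrow> real \<Rightarrow> real" where "bt x t = (c2 t - c1 t) * x + c1 t"
definition W :: "real \<Rightarrow> real" where "W t = integral {0..1} (\<lambda>x. (w x t)^2)"
definition M :: "real \<Rightarrow> real" where "M t = integral {0..1} (\<lambda>x. u x t)"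
definition D1 :: "real \<Rightarrow> real" where "D1 t = integral {0..1} (\<lambda>x. (ux x t)^2 / u x t)"
definition D2 :: "real \<Rightarrow> real" where "D2 t = integral {0..1} (\<lambda>x. (vx x t - bb t)^2)"
definition Ivu :: "real \<Rightarrow> real" where "Ivu t = integral {0..1} (\<lambda>x. v x t * ux x t)"
definition P :: "real \<Rightarrow> real" where "P t = integral {0..1} (\<lambda>x. bet x t * w x t)"
definition Q :: "real \<Rightarrow> real" where "Q t = integral {0..1} (\<lambda>x. w x t * bt x t)"

lemma dW:
  assumes t0: "t0 \<in> {0<..<T}"
  shows "(W has_real_derivative integral {0..1} (\<lambda>x. 2 * w x t0 * (vt x t0 - bt x t0))) (at t0)"
  unfolding W_def
proof (rule leib[OF t0, where fx="\<lambda>t x. 2 * w x t * (vt x t - bt x t)"])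
  fix t x :: real assume t: "t \<in> {0<..<T}" and x: "x \<in> {0..1}"
  have V: "(v x has_real_derivative vt x t) (at t)" using derivs(6)[OF t x] by simp
  have B1: "(beta1 has_real_derivative c1 t) (at t)" using dB1'[of t] t by simp
  have B2: "(beta2 has_real_derivative c2 t) (at t)" using dB2'[of t] t by simp
  have X: "((\<lambda>s. (beta2 s - beta1 s) * x) has_real_derivative (c2 t - c1 t) * x) (at t)"
    by (intro DERIV_cmult_right DERIV_diff B2 B1)
  have G: "((\<lambda>s. w x s) has_real_derivative vt x t - bt x t) (at t)"
    unfolding w_def bet_def bb_def bt_def by (intro DERIV_diff DERIV_add V X B1)
  have "((\<lambda>s. w x s * w x s) has_real_derivative (vt x t - bt x t) * w x t + (vt x t - bt x t) * w x t) (at t)"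
    by (rule DERIV_mult[OF G G])
  then show "((\<lambda>s. (w x s)^2) has_real_derivative 2 * w x t * (vt x t - bt x t)) (at t)"
    by (simp add: power2_eq_square algebra_simps)
next
  fix t assume t: "t \<in> {0<..<T}"
  show "continuous_on {0..1} (\<lambda>x. (w x t)^2)"
    unfolding w_def bet_def by (intro continuous_intros sl[OF t])
next
  show "continuous_on ({0<..<T} \<times> {0..1}) (\<lambda>p. 2 * w (snd p) (fst p) * (vt (snd p) (fst p) - bt (snd p) (fst p)))"
    unfolding w_def bet_def bb_def bt_def
    by (intro continuous_intros cV cVt cB1 cB2 cC1 cC2)
qed

lemma ftc01:
  fixes F f :: "real \<Rightarrow> real"
  assumes "\<And>x. x \<in> {0..1} \<Longrightarrow> (F has_real_derivative f x) (at x within {0..1})"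
  shows "(f has_integral (F 1 - F 0)) {0..1}"
  using fundamental_theorem_of_calculus[of 0 1 F f] assms
  by (simp add: has_real_derivative_iff_has_vector_derivative)

lemma hi:
  fixes f :: "real \<Rightarrow> real"
  shows "continuous_on {0..1} f \<Longrightarrow> (f has_integral integral {0..1} f) {0..1}"
  by (intro integrable_integral integrable_continuous_interval)

lemma evalE:
  assumes t: "t \<in> {0<..<T}"
  shows "integral {0..1} (\<lambda>x. ut x t * (ln (u x t) - ln (alpha t)) - (u x t - alpha t) * a1 t / alpha t)
     = - Ivu t - D1 t - a1 t / alpha t * (M t - alpha t)"
proof -
  note c = sl[OF t]
  have t': "t \<in> {0..<T}" using t by auto
  have up: "\<And>x. x\<in>{0..1} \<Longrightarrow> 0 < u x t" using upos t' by blast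
  have unz: "\<forall>x\<in>{0..1}. u x t \<noteq> 0" using up by (metis less_irrefl)
  have ap: "0 < alpha t" using alpha_pos t by auto
  define L where "L x = ln (u x t) - ln (alpha t)" for x
  have dP: "((\<lambda>y. (u y t * v y t + ux y t) * L y) has_vector_derivative
      ((ux x t * v x t + u x t * vx x t + uxx x t) * L x + (u x t * v x t + ux x t) * (ux x t / u x t))) (at x within {0..1})"
    if x: "x \<in> {0..1}" for x
  proof -
    have U: "((\<lambda>y. u y t) has_real_derivative ux x t) (at x within {0..1})" using derivs(1) t' x by blast
    have V: "((\<lambda>y. v y t) has_real_derivative vx x t) (at x within {0..1})" using derivs(2) t' x by blast
    have UX: "((\<lambda>y. ux y t) has_real_derivative uxx x t) (at x within {0..1})" using derivs(3) t x by blast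
    have LL0: "((\<lambda>y. ln (u y t)) has_real_derivative inverse (u x t) * ux x t) (at x within {0..1})"
      by (rule DERIV_chain'[OF U DERIV_ln[OF up[OF x]]])
    have LL: "(L has_real_derivative inverse (u x t) * ux x t - 0) (at x within {0..1})"
      unfolding L_def by (intro DERIV_diff LL0 DERIV_const)
    have "((\<lambda>y. (u y t * v y t + ux y t) * L y) has_real_derivative
       (ux x t * v x t + vx x t * u x t + uxx x t) * L x + (inverse (u x t) * ux x t - 0) * (u x t * v x t + ux x t)) (at x within {0..1})"
      by (intro DERIV_mult DERIV_add U V UX LL)
    moreover have "(ux x t * v x t + vx x t * u x t + uxx x t) * L x + (inverse (u x t) * ux x t - 0) * (u x t * v x t + ux x t)
      = (ux x t * v x t + u x t * vx x t + uxx x t) * L x + (u x t * v x t + ux x t) * (ux x t / u x t)"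
      using up[OF x] by (simp add: field_simps)
    ultimately show ?thesis by (simp add: has_real_derivative_iff_has_vector_derivative)
  qed
  have h1: "((\<lambda>x. (ux x t * v x t + u x t * vx x t + uxx x t) * L x + (u x t * v x t + ux x t) * (ux x t / u x t))
     has_integral ((u 1 t * v 1 t + ux 1 t) * L 1 - (u 0 t * v 0 t + ux 0 t) * L 0)) {0..1}"
    by (rule fundamental_theorem_of_calculus[OF _ dP]) simp_all
  moreover have "L 1 = 0" "L 0 = 0" using bdry[OF t'] by (auto simp: L_def)
  ultimately have h1: "((\<lambda>x. (ux x t * v x t + u x t * vx x t + uxx x t) * L x + (u x t * v x t + ux x t) * (ux x t / u x t))
     has_integral 0) {0..1}" by simp
  have h2: "((\<lambda>x. v x t * ux x t + (ux x t)^2 / u x t) has_integral (Ivu t + D1 t)) {0..1}"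
    unfolding Ivu_def D1_def by (intro has_integral_add hi continuous_intros c unz)
  have e2: "\<And>x. x\<in>{0..1} \<Longrightarrow> v x t * ux x t + (ux x t)^2 / u x t = (u x t * v x t + ux x t) * (ux x t / u x t)"
  proof -
    fix x :: real assume "x \<in> {0..1}"
    then have "u x t \<noteq> 0" using up by (metis less_irrefl)
    then show "v x t * ux x t + (ux x t)^2 / u x t = (u x t * v x t + ux x t) * (ux x t / u x t)"
      by (rule aux1)
  qed
  have h2': "((\<lambda>x. (u x t * v x t + ux x t) * (ux x t / u x t)) has_integral (Ivu t + D1 t)) {0..1}"
    by (rule has_integral_eq[OF _ h2]) (rule e2)
  have h3: "((\<lambda>x. ((ux x t * v x t + u x t * vx x t + uxx x t) * L x + (u x t * v x t + ux x t) * (ux x t / u x t))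
      - (u x t * v x t + ux x t) * (ux x t / u x t)) has_integral (0 - (Ivu t + D1 t))) {0..1}"
    by (rule has_integral_diff[OF h1 h2'])
  have h3': "((\<lambda>x. (ux x t * v x t + u x t * vx x t + uxx x t) * L x) has_integral (- (Ivu t + D1 t))) {0..1}"
    using h3 by simp
  have h4: "((\<lambda>x. ut x t * L x) has_integral (- (Ivu t + D1 t))) {0..1}"
  proof (rule has_integral_spike_finite_eq[THEN iffD1, OF _ _ h3'])
    show "finite {0::real, 1}" by simp
    fix x assume "x \<in> {0..1} - {0::real, 1}"
    then have "x \<in> {0<..<1}" by auto
    then show "ut x t * L x = (ux x t * v x t + u x t * vx x t + uxx x t) * L x" using pde(1)[OF t] by simp
  qed
  have h5: "((\<lambda>x. (u x t - alpha t) * (a1 t / alpha t)) has_integral ((M t - alpha t) * (a1 t / alpha t))) {0..1}"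
  proof -
    have "((\<lambda>x. u x t) has_integral M t) {0..1}" unfolding M_def by (rule hi[OF c(1)])
    moreover have "((\<lambda>x::real. alpha t) has_integral alpha t) {0..1}" using has_integral_const_real[of "alpha t" 0 1] by simp
    ultimately have "((\<lambda>x. u x t - alpha t) has_integral (M t - alpha t)) {0..1}" by (rule has_integral_diff)
    then show ?thesis by (rule has_integral_mult_left)
  qed
  have "((\<lambda>x. ut x t * L x - (u x t - alpha t) * (a1 t / alpha t)) has_integral (- (Ivu t + D1 t) - (M t - alpha t) * (a1 t / alpha t))) {0..1}"
    by (rule has_integral_diff[OF h4 h5])
  then have "integral {0..1} (\<lambda>x. ut x t * L x - (u x t - alpha t) * (a1 t / alpha t)) = - (Ivu t + D1 t) - (M t - alpha t) * (a1 t / alpha t)"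
    by (rule integral_unique)
  moreover have "(\<lambda>x. ut x t * (ln (u x t) - ln (alpha t)) - (u x t - alpha t) * a1 t / alpha t) = (\<lambda>x. ut x t * L x - (u x t - alpha t) * (a1 t / alpha t))"
    by (simp add: L_def fun_eq_iff)
  moreover have "- (Ivu t + D1 t) - (M t - alpha t) * (a1 t / alpha t) = - Ivu t - D1 t - a1 t / alpha t * (M t - alpha t)"
    by (simp only: mult.commute[of "M t - alpha t"])
  ultimately show ?thesis by simp
qed


lemma dx:
  assumes t: "t \<in> {0<..<T}" and x: "x \<in> {0..1}"
  shows "((\<lambda>y. u y t) has_real_derivative ux x t) (at x within {0..1})"
    "((\<lambda>y. v y t) has_real_derivative vx x t) (at x within {0..1})"
    "((\<lambda>y. ux y t) has_real_derivative uxx x t) (at x within {0..1})"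
    "((\<lambda>y. vx y t) has_real_derivative vxx x t) (at x within {0..1})"
    "((\<lambda>y. bet y t) has_real_derivative bb t) (at x within {0..1})"
    "((\<lambda>y. w y t) has_real_derivative vx x t - bb t) (at x within {0..1})"
proof -
  have t': "t \<in> {0..<T}" using t by auto
  show U: "((\<lambda>y. u y t) has_real_derivative ux x t) (at x within {0..1})" using derivs(1) t' x by blast
  show V: "((\<lambda>y. v y t) has_real_derivative vx x t) (at x within {0..1})" using derivs(2) t' x by blast
  show "((\<lambda>y. ux y t) has_real_derivative uxx x t) (at x within {0..1})" using derivs(3) t x by blast
  show "((\<lambda>y. vx y t) has_real_derivative vxx x t) (at x within {0..1})" using derivs(4) t x by blast
  have "((\<lambda>y. bb t * y + beta1 t) has_real_derivative bb t * 1 + 0) (at x within {0..1})"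
    by (intro DERIV_add DERIV_cmult DERIV_ident DERIV_const)
  then show B: "((\<lambda>y. bet y t) has_real_derivative bb t) (at x within {0..1})" by (simp add: bet_def)
  have "((\<lambda>y. v y t - bet y t) has_real_derivative vx x t - bb t) (at x within {0..1})"
    by (intro DERIV_diff V B)
  then show "((\<lambda>y. w y t) has_real_derivative vx x t - bb t) (at x within {0..1})" by (simp add: w_def)
qed

lemma w01: assumes "t \<in> {0..<T}" shows "w 0 t = 0" "w 1 t = 0"
  using bdry[OF assms] by (auto simp: w_def bet_def bb_def)

lemma evalW:
  assumes t: "t \<in> {0<..<T}"
  shows "integral {0..1} (\<lambda>x. 2 * w x t * (vt x t - bt x t)) =
    2 * Ivu t - 2 * (alpha t * bb t) + 2 * bb t * M t - 2 * eps * D2 t + 2 * eps * bb t * W t + 4 * eps * bb t * P t - 2 * Q t"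
proof -
  note c = sl[OF t]
  have t': "t \<in> {0..<T}" using t by auto
  note w0 = w01[OF t']
  have cw: "continuous_on {0..1} (\<lambda>x. w x t)" unfolding w_def bet_def by (intro continuous_intros c)
  have cbet: "continuous_on {0..1} (\<lambda>x. bet x t)" unfolding bet_def by (intro continuous_intros)
  have cbt: "continuous_on {0..1} (\<lambda>x. bt x t)" unfolding bt_def by (intro continuous_intros)
  define f1 where "f1 x = v x t * ux x t" for x
  define f2 where "f2 x = bb t * u x t + ux x t * bet x t" for x
  define f3 where "f3 x = u x t" for x
  define f4 where "f4 x = (vx x t - bb t) * vx x t + vxx x t * w x t" for x
  define f5 where "f5 x = (vx x t - bb t)^2" for x
  define f6 where "f6 x = vx x t - bb t" for x
  define f7 where "f7 x = 2/3 * (((vx x t - bb t) * w x t + (vx x t - bb t) * w x t) * w x t + (vx x t - bb t) * (w x t * w x t))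
     + (bb t * (w x t * w x t) + ((vx x t - bb t) * w x t + (vx x t - bb t) * w x t) * bet x t)" for x
  define f8 where "f8 x = (w x t)^2" for x
  define f9 where "f9 x = bet x t * w x t" for x
  define f10 where "f10 x = w x t * bt x t" for x
  have i1: "(f1 has_integral Ivu t) {0..1}" unfolding f1_def Ivu_def by (intro hi continuous_intros c)
  have i2: "(f2 has_integral (bet 1 t * u 1 t - bet 0 t * u 0 t)) {0..1}"
  proof (rule ftc01[where F="\<lambda>y. bet y t * u y t"])
    fix x :: real assume x: "x \<in> {0..1}"
    show "((\<lambda>y. bet y t * u y t) has_real_derivative f2 x) (at x within {0..1})"
      unfolding f2_def using DERIV_mult[OF dx(5)[OF t x] dx(1)[OF t x]] .
  qed
  have "bet 1 t * u 1 t - bet 0 t * u 0 t = alpha t * bb t"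
    using bdry[OF t'] by (simp add: bet_def bb_def algebra_simps)
  with i2 have i2: "(f2 has_integral (alpha t * bb t)) {0..1}" by simp
  have i3: "(f3 has_integral M t) {0..1}" unfolding f3_def M_def by (intro hi c)
  have i4: "(f4 has_integral (w 1 t * vx 1 t - w 0 t * vx 0 t)) {0..1}"
  proof (rule ftc01[where F="\<lambda>y. w y t * vx y t"])
    fix x :: real assume x: "x \<in> {0..1}"
    show "((\<lambda>y. w y t * vx y t) has_real_derivative f4 x) (at x within {0..1})"
      unfolding f4_def using DERIV_mult[OF dx(6)[OF t x] dx(4)[OF t x]] .
  qed
  with w0 have i4: "(f4 has_integral 0) {0..1}" by simp
  have i5: "(f5 has_integral D2 t) {0..1}" unfolding f5_def D2_def by (intro hi continuous_intros c)
  have i6: "(f6 has_integral (w 1 t - w 0 t)) {0..1}"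
  proof (rule ftc01[where F="\<lambda>y. w y t"])
    fix x :: real assume x: "x \<in> {0..1}"
    show "((\<lambda>y. w y t) has_real_derivative f6 x) (at x within {0..1})"
      unfolding f6_def by (rule dx(6)[OF t x])
  qed
  with w0 have i6: "(f6 has_integral 0) {0..1}" by simp
  have i7: "(f7 has_integral ((2/3 * (w 1 t * w 1 t * w 1 t) + bet 1 t * (w 1 t * w 1 t)) - (2/3 * (w 0 t * w 0 t * w 0 t) + bet 0 t * (w 0 t * w 0 t)))) {0..1}"
  proof (rule ftc01[where F="\<lambda>y. 2/3 * (w y t * w y t * w y t) + bet y t * (w y t * w y t)"])
    fix x :: real assume x: "x \<in> {0..1}"
    note W = dx(6)[OF t x] and B = dx(5)[OF t x]
    show "((\<lambda>y. 2/3 * (w y t * w y t * w y t) + bet y t * (w y t * w y t)) has_real_derivative f7 x) (at x within {0..1})"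
      unfolding f7_def by (intro DERIV_add DERIV_cmult DERIV_mult W B)
  qed
  with w0 have i7: "(f7 has_integral 0) {0..1}" by simp
  have i8: "(f8 has_integral W t) {0..1}" unfolding f8_def W_def by (intro hi continuous_intros cw)
  have i9: "(f9 has_integral P t) {0..1}" unfolding f9_def P_def by (intro hi continuous_intros cw cbet)
  have i10: "(f10 has_integral Q t) {0..1}" unfolding f10_def Q_def by (intro hi continuous_intros cw cbt)
  have comb: "((\<lambda>x. 2 * f1 x - 2 * f2 x + 2 * bb t * f3 x + 2 * eps * f4 x - 2 * eps * f5 x - 2 * eps * bb t * f6 x
      + 2 * eps * f7 x + 2 * eps * bb t * f8 x + 4 * eps * bb t * f9 x - 2 * f10 x) has_integral
      (2 * Ivu t - 2 * (alpha t * bb t) + 2 * bb t * M t + 2 * eps * 0 - 2 * eps * D2 t - 2 * eps * bb t * 0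
      + 2 * eps * 0 + 2 * eps * bb t * W t + 4 * eps * bb t * P t - 2 * Q t)) {0..1}"
    by (intro has_integral_add has_integral_diff has_integral_mult_right i1 i2 i3 i4 i5 i6 i7 i8 i9 i10)
  have comb': "((\<lambda>x. 2 * w x t * (vt x t - bt x t)) has_integral
      (2 * Ivu t - 2 * (alpha t * bb t) + 2 * bb t * M t + 2 * eps * 0 - 2 * eps * D2 t - 2 * eps * bb t * 0
      + 2 * eps * 0 + 2 * eps * bb t * W t + 4 * eps * bb t * P t - 2 * Q t)) {0..1}"
  proof (rule has_integral_spike_finite_eq[THEN iffD1, OF _ _ comb])
    show "finite {0::real, 1}" by simp
    fix x assume "x \<in> {0..1} - {0::real, 1}"
    then have "x \<in> {0<..<1}" by auto
    then have pd: "vt x t = ux x t + eps * vxx x t + eps * (2 * v x t * vx x t)" using pde(2)[OF t] by simp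
    show "2 * w x t * (vt x t - bt x t) = 2 * f1 x - 2 * f2 x + 2 * bb t * f3 x + 2 * eps * f4 x - 2 * eps * f5 x - 2 * eps * bb t * f6 x
      + 2 * eps * f7 x + 2 * eps * bb t * f8 x + 4 * eps * bb t * f9 x - 2 * f10 x"
      unfolding pd f1_def f2_def f3_def f4_def f5_def f6_def f7_def f8_def f9_def f10_def w_def
      by (simp add: algebra_simps power2_eq_square)
  qed
  then show ?thesis by (simp add: integral_unique)
qed


lemma sl0:
  assumes t: "t \<in> {0..<T}"
  shows "continuous_on {0..1} (\<lambda>x. u x t)" "continuous_on {0..1} (\<lambda>x. v x t)"
    "continuous_on {0..1} (\<lambda>x. ux x t)" "continuous_on {0..1} (\<lambda>x. vx x t)"
  using t by (auto intro: slice_cont[OF conts(1)] slice_cont[OF conts(2)] slice_cont[OF conts(3)]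
     slice_cont[OF conts(4)])

lemma nonnegs:
  assumes t: "t \<in> {0..<T}"
  shows "0 \<le> E t" "0 \<le> W t" "0 \<le> D1 t" "0 \<le> D2 t"
proof -
  note c = sl0[OF t]
  have up: "\<And>x. x\<in>{0..1} \<Longrightarrow> 0 < u x t" using upos t by blast
  have unz: "\<forall>x\<in>{0..1}. u x t \<noteq> 0" using up by (metis less_irrefl)
  have ap: "0 < alpha t" using alpha_pos t by auto
  show "0 \<le> E t" unfolding E_def
  proof (rule integral_nonneg)
    show "(\<lambda>x. phi (u x t) (alpha t)) integrable_on {0..1}"
      unfolding phi_def by (intro integrable_continuous_interval continuous_intros c unz)
    fix x :: real assume "x \<in> {0..1}" then show "0 \<le> phi (u x t) (alpha t)" by (intro phi_nonneg up ap)
  qed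
  show "0 \<le> W t" unfolding W_def w_def bet_def
    by (rule integral_nonneg) (auto intro!: integrable_continuous_interval continuous_intros c)
  show "0 \<le> D1 t" unfolding D1_def
    by (rule integral_nonneg) (auto intro!: integrable_continuous_interval continuous_intros c unz divide_nonneg_pos up)
  show "0 \<le> D2 t" unfolding D2_def
    by (rule integral_nonneg) (auto intro!: integrable_continuous_interval continuous_intros c)
qed

lemma Mbound:
  assumes t: "t \<in> {0..<T}"
  shows "0 \<le> M t" "M t \<le> E t + exp 2 * alpha t"
proof -
  note c = sl0[OF t]
  have up: "\<And>x. x\<in>{0..1} \<Longrightarrow> 0 < u x t" using upos t by blast
  have unz: "\<forall>x\<in>{0..1}. u x t \<noteq> 0" using up by (metis less_irrefl)
  have ap: "0 < alpha t" using alpha_pos t by auto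
  show "0 \<le> M t" unfolding M_def
    by (rule integral_nonneg) (auto intro!: integrable_continuous_interval c less_imp_le up)
  have hE: "((\<lambda>x. phi (u x t) (alpha t)) has_integral E t) {0..1}" unfolding E_def phi_def
    by (intro hi continuous_intros c unz)
  have "((\<lambda>x::real. exp 2 * alpha t) has_integral exp 2 * alpha t) {0..1}"
    using has_integral_const_real[of "exp 2 * alpha t" 0 1] by simp
  with hE have h: "((\<lambda>x. phi (u x t) (alpha t) + exp 2 * alpha t) has_integral (E t + exp 2 * alpha t)) {0..1}"
    by (rule has_integral_add)
  show "M t \<le> E t + exp 2 * alpha t" unfolding M_def
    by (rule has_integral_le[OF hi[OF c(1)] h]) (rule phi_mass[OF up ap])
qed

lemma betbound:
  assumes x: "x \<in> {0..1}" and B: "\<bar>beta1 t\<bar> \<le> Bm" "\<bar>beta2 t\<bar> \<le> Bm"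
  shows "\<bar>bet x t\<bar> \<le> Bm"
proof -
  have "bet x t = beta2 t * x + beta1 t * (1 - x)" by (simp add: bet_def bb_def algebra_simps)
  also have "\<bar>\<dots>\<bar> \<le> \<bar>beta2 t\<bar> * x + \<bar>beta1 t\<bar> * (1 - x)"
    using x by (metis abs_mult abs_of_nonneg abs_triangle_ineq atLeastAtMost_iff diff_ge_0_iff_ge)
  also have "\<dots> \<le> Bm * x + Bm * (1 - x)" using x B by (intro add_mono mult_right_mono) auto
  finally show ?thesis by (simp add: algebra_simps)
qed

lemma btbound:
  assumes x: "x \<in> {0..1}"
  shows "\<bar>bt x t\<bar> \<le> \<bar>c1 t\<bar> + \<bar>c2 t\<bar>"
proof -
  have "bt x t = c2 t * x + c1 t * (1 - x)" by (simp add: bt_def algebra_simps)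
  also have "\<bar>\<dots>\<bar> \<le> \<bar>c2 t\<bar> * x + \<bar>c1 t\<bar> * (1 - x)"
    using x by (metis abs_mult abs_of_nonneg abs_triangle_ineq atLeastAtMost_iff diff_ge_0_iff_ge)
  also have "\<dots> \<le> \<bar>c2 t\<bar> * 1 + \<bar>c1 t\<bar> * 1" using x by (intro add_mono mult_left_mono) auto
  finally show ?thesis by simp
qed

lemma absw: "\<bar>y::real\<bar> \<le> (1 + y^2) / 2"
proof -
  have "0 \<le> (\<bar>y\<bar> - 1)^2" by simp
  then show ?thesis by (simp add: power2_eq_square algebra_simps abs_mult_self_eq)
qed

lemma prodbound:
  fixes k y z :: real
  assumes "\<bar>k\<bar> \<le> B"
  shows "\<bar>k * y\<bar> \<le> B * (1 + y^2) / 2"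
proof -
  have "\<bar>k * y\<bar> = \<bar>k\<bar> * \<bar>y\<bar>" by (simp add: abs_mult)
  also have "\<dots> \<le> B * ((1 + y^2) / 2)" using assms absw[of y] by (intro mult_mono) auto
  finally show ?thesis by simp
qed

lemma PQbound:
  assumes t: "t \<in> {0<..<T}" and B: "\<bar>beta1 t\<bar> \<le> Bm" "\<bar>beta2 t\<bar> \<le> Bm"
  shows "\<bar>P t\<bar> \<le> Bm * (1 + W t) / 2" "\<bar>Q t\<bar> \<le> (\<bar>c1 t\<bar> + \<bar>c2 t\<bar>) * (1 + W t) / 2"
proof -
  note c = sl[OF t]
  have cw: "continuous_on {0..1} (\<lambda>x. w x t)" unfolding w_def bet_def by (intro continuous_intros c)
  have cbet: "continuous_on {0..1} (\<lambda>x. bet x t)" unfolding bet_def by (intro continuous_intros)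
  have cbt: "continuous_on {0..1} (\<lambda>x. bt x t)" unfolding bt_def by (intro continuous_intros)
  have hW: "((\<lambda>x. (w x t)^2) has_integral W t) {0..1}" unfolding W_def by (intro hi continuous_intros cw)
  have one: "((\<lambda>x::real. 1) has_integral 1) {0..1}" using has_integral_const_real[of 1 0 1] by simp
  have hW1: "((\<lambda>x. 1 + (w x t)^2) has_integral (1 + W t)) {0..1}" by (rule has_integral_add[OF one hW])
  have hP: "((\<lambda>x. bet x t * w x t) has_integral P t) {0..1}" unfolding P_def by (intro hi continuous_intros cw cbet)
  have hQ: "((\<lambda>x. bt x t * w x t) has_integral Q t) {0..1}" unfolding Q_def
    by (subst mult.commute) (intro hi continuous_intros cw cbt)
  have pb: "\<And>x. x \<in> {0..1} \<Longrightarrow> \<bar>bet x t * w x t\<bar> \<le> Bm * (1 + (w x t)^2) / 2"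
    using betbound[OF _ B] prodbound by blast
  have qb: "\<And>x. x \<in> {0..1} \<Longrightarrow> \<bar>bt x t * w x t\<bar> \<le> (\<bar>c1 t\<bar> + \<bar>c2 t\<bar>) * (1 + (w x t)^2) / 2"
    using btbound prodbound by blast
  have h1: "((\<lambda>x. Bm * (1 + (w x t)^2) / 2) has_integral (Bm * (1 + W t) / 2)) {0..1}"
    by (rule has_integral_divide[OF has_integral_mult_right[OF hW1]])
  show "\<bar>P t\<bar> \<le> Bm * (1 + W t) / 2"
  proof -
    have "P t \<le> Bm * (1 + W t) / 2"
      by (rule has_integral_le[OF hP h1]) (meson abs_le_D1 pb)
    moreover have "- P t \<le> Bm * (1 + W t) / 2"
      by (rule has_integral_le[OF has_integral_neg[OF hP] h1]) (meson abs_le_D2 pb)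
    ultimately show ?thesis by linarith
  qed
  have h2: "((\<lambda>x. (\<bar>c1 t\<bar> + \<bar>c2 t\<bar>) * (1 + (w x t)^2) / 2) has_integral ((\<bar>c1 t\<bar> + \<bar>c2 t\<bar>) * (1 + W t) / 2)) {0..1}"
    by (rule has_integral_divide[OF has_integral_mult_right[OF hW1]])
  show "\<bar>Q t\<bar> \<le> (\<bar>c1 t\<bar> + \<bar>c2 t\<bar>) * (1 + W t) / 2"
  proof -
    have "Q t \<le> (\<bar>c1 t\<bar> + \<bar>c2 t\<bar>) * (1 + W t) / 2"
      by (rule has_integral_le[OF hQ h2]) (meson abs_le_D1 qb)
    moreover have "- Q t \<le> (\<bar>c1 t\<bar> + \<bar>c2 t\<bar>) * (1 + W t) / 2"
      by (rule has_integral_le[OF has_integral_neg[OF hQ] h2]) (meson abs_le_D2 qb)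
    ultimately show ?thesis by linarith
  qed
qed


definition R :: "real \<Rightarrow> real" where
  "R t = - a1 t / alpha t * (M t - alpha t) - alpha t * bb t + bb t * M t + eps * bb t * W t + 2 * eps * bb t * P t - Q t"
definition Dis :: "real \<Rightarrow> real" where "Dis t = D1 t + eps * D2 t"

lemma dF:
  assumes t: "t \<in> {0<..<T}"
  shows "((\<lambda>t. E t + W t / 2) has_real_derivative R t - Dis t) (at t)"
proof -
  have "((\<lambda>t. E t + W t / 2) has_real_derivative
     (- Ivu t - D1 t - a1 t / alpha t * (M t - alpha t)) +
     (2 * Ivu t - 2 * (alpha t * bb t) + 2 * bb t * M t - 2 * eps * D2 t + 2 * eps * bb t * W t + 4 * eps * bb t * P t - 2 * Q t) / 2) (at t)"
    using DERIV_add[OF dE[OF t] DERIV_cdivide[OF dW[OF t], of 2]] evalE[OF t] evalW[OF t] by simp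
  moreover have "(- Ivu t - D1 t - a1 t / alpha t * (M t - alpha t)) +
     (2 * Ivu t - 2 * (alpha t * bb t) + 2 * bb t * M t - 2 * eps * D2 t + 2 * eps * bb t * W t + 4 * eps * bb t * P t - 2 * Q t) / 2
     = R t - Dis t"
    by (simp add: R_def Dis_def field_simps)
  ultimately show ?thesis by simp
qed

lemma param_cont:
  fixes f :: "real \<Rightarrow> real \<Rightarrow> real"
  assumes "continuous_on ({0..<T} \<times> {0..1}) (\<lambda>p. f (fst p) (snd p))"
  shows "continuous_on {0..<T} (\<lambda>t. integral {0..1} (f t))"
proof -
  have "continuous_on ({0..<T} \<times> cbox 0 1) (\<lambda>(t, x). f t x)"
    using assms by (simp add: case_prod_beta cbox_interval)
  from integral_continuous_on_param[OF this] show ?thesis by (simp add: cbox_interval)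
qed

lemma cU0: "continuous_on ({0..<T} \<times> {0..1}) (\<lambda>p. u (snd p) (fst p))"
  by (rule swap_cont[OF conts(1)]) auto
lemma cV0: "continuous_on ({0..<T} \<times> {0..1}) (\<lambda>p. v (snd p) (fst p))"
  by (rule swap_cont[OF conts(2)]) auto
lemma cUx0: "continuous_on ({0..<T} \<times> {0..1}) (\<lambda>p. ux (snd p) (fst p))"
  by (rule swap_cont[OF conts(3)]) auto
lemma cVx0: "continuous_on ({0..<T} \<times> {0..1}) (\<lambda>p. vx (snd p) (fst p))"
  by (rule swap_cont[OF conts(4)]) auto
lemma cA0: "continuous_on ({0..<T} \<times> {0..1}) (\<lambda>p. alpha (fst p))"
  by (rule fst_cont, rule continuous_on_subset[OF calpha]) auto
lemma cB10: "continuous_on ({0..<T} \<times> {0..1}) (\<lambda>p. beta1 (fst p))"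
  by (rule fst_cont, rule continuous_on_subset[OF cbeta1]) auto
lemma cB20: "continuous_on ({0..<T} \<times> {0..1}) (\<lambda>p. beta2 (fst p))"
  by (rule fst_cont, rule continuous_on_subset[OF cbeta2]) auto

lemma nz0: "\<forall>p \<in> {0..<T}\<times>{0..1}. u (snd p) (fst p) \<noteq> 0" "\<forall>p \<in> {0..<T}\<times>{0..1::real}. alpha (fst p) \<noteq> 0"
proof -
  show "\<forall>p \<in> {0..<T}\<times>{0..1}. u (snd p) (fst p) \<noteq> 0"
  proof
    fix p :: "real \<times> real" assume "p \<in> {0..<T}\<times>{0..1}"
    then have "fst p \<in> {0..<T}" "snd p \<in> {0..1}" by (auto simp: mem_Times_iff)
    then have "0 < u (snd p) (fst p)" using upos by blast
    then show "u (snd p) (fst p) \<noteq> 0" by simp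
  qed
  show "\<forall>p \<in> {0..<T}\<times>{0..1::real}. alpha (fst p) \<noteq> 0"
  proof
    fix p :: "real \<times> real" assume "p \<in> {0..<T}\<times>{0..1}"
    then have "0 \<le> fst p" by (auto simp: mem_Times_iff)
    then have "0 < alpha (fst p)" by (rule alpha_pos)
    then show "alpha (fst p) \<noteq> 0" by simp
  qed
qed

lemma contE: "continuous_on {0..<T} E"
  unfolding E_def[abs_def] phi_def
  by (rule param_cont) (intro continuous_on_diff continuous_on_mult continuous_on_ln cU0 cA0 nz0)

lemma contW: "continuous_on {0..<T} W"
  unfolding W_def[abs_def] w_def bet_def bb_def
  by (rule param_cont) (intro continuous_intros cV0 cB10 cB20)

lemma contD1: "continuous_on {0..<T} D1"
  unfolding D1_def[abs_def]
  by (rule param_cont) (intro continuous_on_divide continuous_on_power cUx0 cU0 nz0)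

lemma contD2: "continuous_on {0..<T} D2"
  unfolding D2_def[abs_def] bb_def
  by (rule param_cont) (intro continuous_intros cVx0 cB10 cB20)

lemma contDis: "continuous_on {0..<T} Dis"
  unfolding Dis_def[abs_def] by (intro continuous_intros contD1 contD2)

lemma contF: "continuous_on {0..<T} (\<lambda>t. E t + W t / 2)"
  by (auto intro!: continuous_intros contE contW)


lemma Rbound:
  assumes t: "t \<in> {0<..<T}" and amin: "amin > 0"
    and ab: "\<And>s. 0 \<le> s \<Longrightarrow> amin \<le> alpha s \<and> alpha s \<le> amax"
    and bb: "\<And>s. 0 \<le> s \<Longrightarrow> \<bar>beta1 s\<bar> \<le> Bm \<and> \<bar>beta2 s\<bar> \<le> Bm" and Bm: "Bm \<ge> 0"
  shows "R t \<le> ((1 + exp 2 * amax + amax) / amin * \<bar>a1 t\<bar> + (1 + exp 2 * amax + amax + 2 * eps + 2 * eps * Bm) * \<bar>bb t\<bar> + \<bar>c1 t\<bar> + \<bar>c2 t\<bar>) * (1 + E t + W t / 2)"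
proof -
  have t': "t \<in> {0..<T}" using t by auto
  have t0: "0 \<le> t" using t by auto
  show ?thesis unfolding R_def
    by (rule alg[OF amin conjunct1[OF ab[OF t0]] conjunct2[OF ab[OF t0]] Mbound[OF t'] nonnegs(1,2)[OF t']
        PQbound[OF t conjunct1[OF bb[OF t0]] conjunct2[OF bb[OF t0]]] eps Bm])
qed

lemma bound:
  fixes gg :: "real \<Rightarrow> real" and Gt :: real
  assumes t: "t \<in> {0..<T}"
    and gg: "continuous_on {0..} gg" "\<And>s. 0 \<le> s \<Longrightarrow> 0 \<le> gg s"
    and Gt: "integral {0..t} gg \<le> Gt"
    and Rb: "\<And>s. s \<in> {0<..<T} \<Longrightarrow> R s \<le> gg s * (1 + E s + W s / 2)"
  shows "E t + W t + integral {0..t} D1 + integral {0..t} (\<lambda>s. eps * D2 s) \<le> 2 * (1 + E 0 + W 0 / 2) * exp Gt"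
proof -
  have tT: "{0..t} \<subseteq> {0..<T}" using t by auto
  have cDis: "continuous_on {0..t} Dis" using contDis tT by (rule continuous_on_subset)
  define ID where "ID s = integral {0..s} Dis" for s
  have IDd: "(ID has_real_derivative Dis s) (at s within {0..t})" if "s \<in> {0..t}" for s
    unfolding ID_def by (rule integral_has_real_derivative[OF cDis that])
  have cID: "continuous_on {0..t} ID"
    using IDd by (meson DERIV_continuous continuous_on_eq_continuous_within)
  define K where "K s = 1 + E s + W s / 2 + ID s" for s
  have Dis0: "\<And>s. s \<in> {0..<T} \<Longrightarrow> 0 \<le> Dis s" using nonnegs eps by (simp add: Dis_def)
  have ID0: "0 \<le> ID s" if "s \<in> {0..t}" for s
  proof -
    have "{0..s} \<subseteq> {0..<T}" using that t by auto
    then show ?thesis unfolding ID_def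
      by (intro integral_nonneg integrable_continuous_interval) (auto intro: continuous_on_subset[OF contDis] Dis0)
  qed
  have "K t \<le> K 0 * exp (integral {0..t} gg)"
  proof (rule gronwall_aux)
    show "0 \<le> t" using t by auto
    show "continuous_on {0..t} K" unfolding K_def
      by (intro continuous_intros cID continuous_on_subset[OF contE tT] continuous_on_subset[OF contW tT]) auto
    show "continuous_on {0..t} gg" using gg(1) by (rule continuous_on_subset) auto
    fix s assume s: "0 < s" "s < t"
    have sT: "s \<in> {0<..<T}" using s t by auto
    have "s \<in> interior {0..t}" using s by auto
    then have eq: "at s within {0..t} = at s" by (rule at_within_interior)
    have d1: "(ID has_real_derivative Dis s) (at s)" using IDd[of s] s eq by auto
    have "(K has_real_derivative (R s - Dis s) + Dis s) (at s)"
      unfolding K_def using DERIV_add[OF DERIV_add[OF DERIV_const dF[OF sT]] d1]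
      by (simp add: add.assoc)
    moreover have "(R s - Dis s) + Dis s \<le> gg s * K s"
    proof -
      have "R s \<le> gg s * (1 + E s + W s / 2)" using Rb[OF sT] .
      also have "\<dots> \<le> gg s * K s" unfolding K_def using gg(2)[of s] ID0[of s] s
        by (intro mult_left_mono) auto
      finally show ?thesis by simp
    qed
    ultimately show "\<exists>K'. (K has_real_derivative K') (at s) \<and> K' \<le> gg s * K s" by blast
  qed
  also have "\<dots> \<le> K 0 * exp Gt"
  proof (rule mult_left_mono)
    show "exp (integral {0..t} gg) \<le> exp Gt" using Gt by simp
    show "0 \<le> K 0" unfolding K_def using nonnegs[of 0] ID0[of 0] t by auto
  qed
  finally have Kt: "K t \<le> K 0 * exp Gt" .
  have "integral {0..t} D1 + integral {0..t} (\<lambda>s. eps * D2 s) = ID t"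
  proof -
    have "integral {0..t} (\<lambda>s. D1 s + eps * D2 s) = integral {0..t} D1 + integral {0..t} (\<lambda>s. eps * D2 s)"
      by (intro integral_add integrable_continuous_interval continuous_intros continuous_on_subset[OF contD1 tT]
          continuous_on_subset[OF contD2 tT])
    then show ?thesis by (simp add: ID_def Dis_def[abs_def])
  qed
  moreover have "0 \<le> E t" "0 \<le> ID t" using nonnegs(1)[OF t] ID0[of t] t by auto
  moreover have k0: "K 0 = 1 + E 0 + W 0 / 2" by (simp add: K_def ID_def)
  moreover have "1 + E t + W t / 2 + ID t \<le> (1 + E 0 + W 0 / 2) * exp Gt"
    using Kt[unfolded k0] by (simp add: K_def)
  moreover have "2 * (1 + E 0 + W 0 / 2) * exp Gt = 2 * ((1 + E 0 + W 0 / 2) * exp Gt)" by simp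
  ultimately show ?thesis by linarith
qed

end



lemma deriv_bound:
  fixes f f' :: "real \<Rightarrow> real"
  assumes d: "\<And>t. 0 \<le> t \<Longrightarrow> (f has_real_derivative f' t) (at t within {0..})"
    and ai: "f' absolutely_integrable_on {0..}" and t: "0 \<le> t"
  shows "\<bar>f t - f 0\<bar> \<le> integral {0..} (\<lambda>s. \<bar>f' s\<bar>)"
proof -
  have "(f' has_integral (f t - f 0)) {0..t}"
  proof (rule fundamental_theorem_of_calculus[OF t])
    fix x assume x: "x \<in> {0..t}"
    have "(f has_real_derivative f' x) (at x within {0..t})"
      by (rule DERIV_subset[OF d]) (use x in auto)
    then show "(f has_vector_derivative f' x) (at x within {0..t})"
      by (simp add: has_real_derivative_iff_has_vector_derivative)
  qed
  then have eq: "integral {0..t} f' = f t - f 0" by (rule integral_unique)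
  have i1: "f' integrable_on {0..}" and i2: "(\<lambda>s. \<bar>f' s\<bar>) integrable_on {0..}"
    using ai unfolding absolutely_integrable_on_def by auto
  have i1': "f' integrable_on {0..t}" by (rule integrable_on_subinterval[OF i1]) auto
  have i2': "(\<lambda>s. \<bar>f' s\<bar>) integrable_on {0..t}" by (rule integrable_on_subinterval[OF i2]) auto
  have "norm (integral {0..t} f') \<le> integral {0..t} (\<lambda>s. \<bar>f' s\<bar>)"
    by (rule integral_norm_bound_integral[OF i1' i2']) simp
  also have "\<dots> \<le> integral {0..} (\<lambda>s. \<bar>f' s\<bar>)"
    by (rule integral_subset_le[OF _ i2' i2]) auto
  finally show ?thesis using eq by simp
qed

lemma smooth_facts:
  assumes "smooth_derivs_nonneg D g"
  shows "\<And>t. 0 \<le> t \<Longrightarrow> (g has_real_derivative D 1 t) (at t within {0..})"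
    and "continuous_on {0..} (D 1)"
proof -
  have D0: "\<forall>t\<ge>0. D 0 t = g t" and Dd: "\<And>n t. t \<ge> 0 \<Longrightarrow> (D n has_real_derivative D (Suc n) t) (at t within {0..})"
    using assms unfolding smooth_derivs_nonneg_def by auto
  show "(g has_real_derivative D 1 t) (at t within {0..})" if t: "0 \<le> t" for t
  proof (rule has_field_derivative_transform_within[OF _ zero_less_one])
    show "(D 0 has_real_derivative D 1 t) (at t within {0..})" using Dd[of t 0] t by simp
    show "t \<in> {0..}" using t by simp
    show "\<And>x. x \<in> {0..} \<Longrightarrow> dist x t < 1 \<Longrightarrow> D 0 x = g x" using D0 by auto
  qed
  show "continuous_on {0..} (D 1)"
    by (rule DERIV_continuous_on[where D="D 2"]) (use Dd[of _ 1] in \<open>auto simp: numeral_2_eq_2\<close>)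
qed

theorem lemma1:
  fixes eps :: real and alpha beta1 beta2 u0 v0 :: "real \<Rightarrow> real"
    and A B1 B2 :: "nat \<Rightarrow> real \<Rightarrow> real"
  assumes eps_pos: "eps > 0"
    and u0_pos: "\<forall>x\<in>{0..1}. u0 x > 0"
    and H2: "H2_01 u0" "H2_01 v0"
    and compat: "u0 0 = alpha 0" "u0 1 = alpha 0" "v0 0 = beta1 0" "v0 1 = beta2 0"
    and smoothA: "smooth_derivs_nonneg A alpha"
    and smoothB1: "smooth_derivs_nonneg B1 beta1"
    and smoothB2: "smooth_derivs_nonneg B2 beta2"
    and alpha_lower: "\<exists>a>0. \<forall>t\<ge>0. alpha t \<ge> a"
    and alpha'_W11: "A 1 absolutely_integrable_on {0..}" "A 2 absolutely_integrable_on {0..}"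
    and beta_diff_L1: "(\<lambda>t. beta1 t - beta2 t) absolutely_integrable_on {0..}"
    and beta1'_W11: "B1 1 absolutely_integrable_on {0..}" "B1 2 absolutely_integrable_on {0..}"
    and beta2'_W11: "B2 1 absolutely_integrable_on {0..}" "B2 2 absolutely_integrable_on {0..}"
  shows "\<exists>C>0. \<forall>T u v ux uxx ut vx vxx vt.
           classical_solution eps alpha beta1 beta2 u0 v0 T u v ux uxx ut vx vxx vt \<and>
           (\<forall>t\<in>{0..<T}. \<forall>x\<in>{0..1}. u x t > 0) \<longrightarrow>
           (\<forall>t\<in>{0..<T}.
              rel_entropy (\<lambda>x. u x t) (alpha t)
              + integral {0..1} (\<lambda>x. (v x t - ((beta2 t - beta1 t) * x + beta1 t))^2)
              + integral {0..t} (\<lambda>\<tau>. integral {0..1} (\<lambda>x. (ux x \<tau>)^2 / u x \<tau>))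
              + integral {0..t} (\<lambda>\<tau>. eps * integral {0..1} (\<lambda>x. (vx x \<tau> - (beta2 \<tau> - beta1 \<tau>))^2))
              \<le> C)"
proof -
  obtain amin where amin: "amin > 0" "\<And>t. 0 \<le> t \<Longrightarrow> amin \<le> alpha t" using alpha_lower by auto
  note dA = smooth_facts(1)[OF smoothA] and cA1 = smooth_facts(2)[OF smoothA]
  note dB1 = smooth_facts(1)[OF smoothB1] and cB1 = smooth_facts(2)[OF smoothB1]
  note dB2 = smooth_facts(1)[OF smoothB2] and cB2 = smooth_facts(2)[OF smoothB2]
  define IA where "IA = integral {0..} (\<lambda>s. \<bar>A 1 s\<bar>)"
  define IB1 where "IB1 = integral {0..} (\<lambda>s. \<bar>B1 1 s\<bar>)"
  define IB2 where "IB2 = integral {0..} (\<lambda>s. \<bar>B2 1 s\<bar>)"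
  define amax where "amax = alpha 0 + IA"
  define Bm where "Bm = \<bar>beta1 0\<bar> + IB1 + \<bar>beta2 0\<bar> + IB2"
  have IA0: "0 \<le> IA" "0 \<le> IB1" "0 \<le> IB2" unfolding IA_def IB1_def IB2_def
    using alpha'_W11(1) beta1'_W11(1) beta2'_W11(1)
    by (auto intro!: integral_nonneg simp: absolutely_integrable_on_def)
  have ab: "amin \<le> alpha s \<and> alpha s \<le> amax" if "0 \<le> s" for s
    using amin(2)[OF that] deriv_bound[OF dA alpha'_W11(1) that] unfolding amax_def IA_def by auto
  have bb: "\<bar>beta1 s\<bar> \<le> Bm \<and> \<bar>beta2 s\<bar> \<le> Bm" if "0 \<le> s" for s
    using deriv_bound[OF dB1 beta1'_W11(1) that] deriv_bound[OF dB2 beta2'_W11(1) that] IA0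
    unfolding Bm_def IB1_def IB2_def by auto
  have Bm0: "0 \<le> Bm" unfolding Bm_def using IA0 by auto
  define K1 where "K1 = (1 + exp 2 * amax + amax) / amin"
  define K2 where "K2 = 1 + exp 2 * amax + amax + 2 * eps + 2 * eps * Bm"
  define gg where "gg s = K1 * \<bar>A 1 s\<bar> + K2 * \<bar>beta2 s - beta1 s\<bar> + \<bar>B1 1 s\<bar> + \<bar>B2 1 s\<bar>" for s
  have "amin \<le> amax" using ab[of 0] by auto
  then have amax0: "0 < amax" using amin(1) by linarith
  have K0: "0 \<le> K1" "0 \<le> K2" unfolding K1_def K2_def using amin amax0 eps_pos Bm0 by auto
  have gg0: "\<And>s. 0 \<le> gg s" unfolding gg_def using K0 by auto
  have cbeta: "continuous_on {0..} beta1" "continuous_on {0..} beta2"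
    using dB1 dB2 by (meson DERIV_continuous atLeast_iff continuous_on_eq_continuous_within)+
  have cgg: "continuous_on {0..} gg" unfolding gg_def
    by (intro continuous_intros cA1 cB1 cB2 cbeta)
  have igg: "gg integrable_on {0..}"
  proof -
    have "(\<lambda>s. \<bar>A 1 s\<bar>) integrable_on {0..}" "(\<lambda>s. \<bar>B1 1 s\<bar>) integrable_on {0..}" "(\<lambda>s. \<bar>B2 1 s\<bar>) integrable_on {0..}"
      "(\<lambda>s. \<bar>beta1 s - beta2 s\<bar>) integrable_on {0..}"
      using alpha'_W11(1) beta1'_W11(1) beta2'_W11(1) beta_diff_L1 by (auto simp: absolutely_integrable_on_def)
    moreover have "(\<lambda>s. \<bar>beta2 s - beta1 s\<bar>) = (\<lambda>s. \<bar>beta1 s - beta2 s\<bar>)" by (simp add: abs_minus_commute)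
    ultimately show ?thesis unfolding gg_def
      by (intro integrable_add integrable_on_mult_right) auto
  qed
  define Gt where "Gt = integral {0..} gg"
  have Gt: "integral {0..t} gg \<le> Gt" if "0 \<le> t" for t
    unfolding Gt_def by (rule integral_subset_le[OF _ integrable_on_subinterval[OF igg] igg]) (use gg0 in auto)
  define E0 where "E0 = integral {0..1} (\<lambda>x. phi (u0 x) (alpha 0))"
  define W0 where "W0 = integral {0..1} (\<lambda>x. (v0 x - ((beta2 0 - beta1 0) * x + beta1 0))^2)"
  define C where "C = 2 * (1 + \<bar>E0\<bar> + \<bar>W0\<bar> / 2) * exp Gt"
  have Cpos: "C > 0" unfolding C_def by (simp add: add_pos_nonneg)
  show ?thesis
  proof (intro exI[of _ C] conjI Cpos allI impI ballI)
    fix T u v ux uxx ut vx vxx vt t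
    assume hyp: "classical_solution eps alpha beta1 beta2 u0 v0 T u v ux uxx ut vx vxx vt \<and>
           (\<forall>t\<in>{0..<T}. \<forall>x\<in>{0..1}. u x t > 0)"
      and t: "t \<in> {0..<T}"
    interpret S: sol eps alpha beta1 beta2 "A 1" "B1 1" "B2 1" u0 v0 T u v ux uxx ut vx vxx vt
    proof
      show "0 < eps" by (rule eps_pos)
      show "\<And>t. 0 \<le> t \<Longrightarrow> 0 < alpha t" using amin by (meson less_le_trans)
    qed (use dA dB1 dB2 cA1 cB1 cB2 hyp in auto)
    have Rb: "S.R s \<le> gg s * (1 + S.E s + S.W s / 2)" if "s \<in> {0<..<T}" for s
      using S.Rbound[OF that amin(1) ab bb Bm0] unfolding gg_def K1_def K2_def S.bb_def by simp
    have main: "S.E t + S.W t + integral {0..t} S.D1 + integral {0..t} (\<lambda>s. eps * S.D2 s) \<le> 2 * (1 + S.E 0 + S.W 0 / 2) * exp Gt"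
      by (rule S.bound[OF t cgg gg0 Gt Rb]) (use t in auto)
    have e0: "S.E 0 = E0" unfolding S.E_def E0_def
      by (rule integral_cong) (simp add: S.init)
    have w0: "S.W 0 = W0" unfolding S.W_def W0_def S.w_def S.bet_def S.bb_def
      by (rule integral_cong) (simp add: S.init)
    have le: "2 * (1 + S.E 0 + S.W 0 / 2) * exp Gt \<le> C"
      unfolding C_def e0 w0 by (intro mult_right_mono mult_left_mono add_mono) auto
    have eq1: "rel_entropy (\<lambda>x. u x t) (alpha t) = S.E t"
      unfolding rel_entropy_def S.E_def phi_def ..
    have eq2: "integral {0..1} (\<lambda>x. (v x t - ((beta2 t - beta1 t) * x + beta1 t))^2) = S.W t"
      unfolding S.W_def S.w_def S.bet_def S.bb_def ..
    have eq3: "(\<lambda>\<tau>. integral {0..1} (\<lambda>x. (ux x \<tau>)^2 / u x \<tau>)) = S.D1"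
      unfolding S.D1_def[abs_def] ..
    have eq4: "(\<lambda>\<tau>. eps * integral {0..1} (\<lambda>x. (vx x \<tau> - (beta2 \<tau> - beta1 \<tau>))^2)) = (\<lambda>s. eps * S.D2 s)"
      unfolding S.D2_def S.bb_def ..
    show "rel_entropy (\<lambda>x. u x t) (alpha t)
              + integral {0..1} (\<lambda>x. (v x t - ((beta2 t - beta1 t) * x + beta1 t))^2)
              + integral {0..t} (\<lambda>\<tau>. integral {0..1} (\<lambda>x. (ux x \<tau>)^2 / u x \<tau>))
              + integral {0..t} (\<lambda>\<tau>. eps * integral {0..1} (\<lambda>x. (vx x \<tau> - (beta2 \<tau> - beta1 \<tau>))^2))
              \<le> C" unfolding eq1 eq2 eq3 eq4 using main le by linarith
  qed
qed


end
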